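(* Let $e_b>0$ and define $\xi$ by $$\xi e_b=\tfrac12-\tfrac{1}{2\sqrt2}(1-3e_b)+\sqrt{\tfrac{1-(1-3e_b)^2}{24}} .$$ Assume $\xi\ge1$, $e_b<\frac{1}{2(1+\xi)}$ and $e_b<\frac{1}{2\xi}$. For $a\in[0,e_b]$ consider the initial triple $(p_X,p_Y,p_Z)=(e_b-a,\;a,\;\xi e_b-a)$. Fix any finite sequence of B steps and P steps whose first step is a B step, let $(p_X',p_Y',p_Z')$ be the result of applying it, and let $R(a)=1-H_2(p_X'+p_Y')-H_2(p_Z'+p_Y')$. Then the minimum of $R(a)$ over $a\in[0,e_b]$ (the worst case) is attained at $a=0$.
   Context: $H_2(p)=-p\log_2 p-(1-p)\log_2(1-p)$. A B step maps $(p_X,p_Y,p_Z)$ to $p_X'=(p_X^2+p_Y^2)/p_S$, $p_Y'=2p_Xp_Y/p_S$, $p_Z'=2(1-p_X-p_Y-p_Z)p_Z/p_S$ with $p_S=1-2(p_X+p_Y)(1-p_X-p_Y)$. A P step maps $(p_X,p_Y,p_Z)$, with $p_I=1-p_X-p_Y-p_Z$, to $p_X'=3p_I^2(p_X+p_Y)+6p_Ip_Xp_Z+3p_X^2p_Y+p_X^3$, $p_Y'=6p_Ip_Yp_Z+3p_X(p_Y^2+p_Z^2)+3p_Yp_Z^2+p_Y^3$, $p_Z'=3p_I(p_Y^2+p_Z^2)+6p_Xp_Yp_Z+3p_Y^2p_Z+p_Z^3$. This is the (worst-case) two-photon SARG04 initial state, with $e_b$ the bit error rate and $a$ the $Y$-error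 rate. *)

theory Defs
  imports Complex_Main
begin

text \<open>Binary entropy (log base 2). Isabelle's log 2 0 = 0, so H2 0 = H2 1 = 0.\<close>
definition H2 :: "real \<Rightarrow> real" where
  "H2 p = - p * log 2 p - (1 - p) * log 2 (1 - p)"

type_synonym triple = "real \<times> real \<times> real"

definition B_step :: "triple \<Rightarrow> triple" where
  "B_step t = (case t of (pX, pY, pZ) \<Rightarrow>
     let pS = 1 - 2 * (pX + pY) * (1 - pX - pY) in
     ((pX^2 + pY^2) / pS, 2 * pX * pY / pS, 2 * (1 - pX - pY - pZ) * pZ / pS))"

definition P_step :: "triple \<Rightarrow> triple" where
  "P_step t = (case t of (pX, pY, pZ) \<Rightarrow>
     let pI = 1 - pX - pY - pZ in
     (3 * pI^2 * (pX + pY) + 6 * pI * pX * pZ + 3 * pX^2 * pY + pX^3,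
      6 * pI * pY * pZ + 3 * pX * (pY^2 + pZ^2) + 3 * pY * pZ^2 + pY^3,
      3 * pI * (pY^2 + pZ^2) + 6 * pX * pY * pZ + 3 * pY^2 * pZ + pZ^3))"

datatype step = B | P

fun apply_step :: "step \<Rightarrow> triple \<Rightarrow> triple" where
  "apply_step B t = B_step t"
| "apply_step P t = P_step t"

fun apply_steps :: "step list \<Rightarrow> triple \<Rightarrow> triple" where
  "apply_steps [] t = t"
| "apply_steps (s # ss) t = apply_steps ss (apply_step s t)"

definition rate :: "step list \<Rightarrow> real \<Rightarrow> real \<Rightarrow> real \<Rightarrow> real" where
  "rate ss eb xi a = (case apply_steps ss (eb - a, a, xi * eb - a) of
     (pX, pY, pZ) \<Rightarrow> 1 - H2 (pX + pY) - H2 (pZ + pY))"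

end

theory Submission
  imports Defs
begin

definition phi :: "triple \<Rightarrow> triple" where
  "phi t = (case t of (x, y, z) \<Rightarrow> (1 - 2*(x+y), 1 - 2*(y+z), 1 - 2*(x+z)))"

definition Bf :: "triple \<Rightarrow> triple" where
  "Bf t = (case t of (b, f, g) \<Rightarrow> (2*b/(1+b^2), (f^2+g^2)/(1+b^2), 2*f*g/(1+b^2)))"

definition Pf :: "triple \<Rightarrow> triple" where
  "Pf t = (case t of (b, f, g) \<Rightarrow> (b^3, (3*f - f^3)/2, (3*b^2*g - g^3)/2))"

fun stepF :: "step \<Rightarrow> triple \<Rightarrow> triple" where
  "stepF B t = Bf t"
| "stepF P t = Pf t"

fun stepsF :: "step list \<Rightarrow> triple \<Rightarrow> triple" where
  "stepsF [] t = t"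
| "stepsF (s # ss) t = stepsF ss (stepF s t)"

lemma phi_B: "phi (B_step t) = Bf (phi t)"
proof -
  obtain x y z where t: "t = (x, y, z)" by (cases t) auto
  have pS: "1 - 2 * (x + y) * (1 - x - y) > 0"
  proof -
    have "1 - 2 * (x + y) * (1 - x - y) = (x+y)^2 + (1-x-y)^2" by (simp add: power2_eq_square algebra_simps)
    also have "\<dots> > 0"
    proof (cases "x + y = 0")
      case True then show ?thesis by (simp add: algebra_simps)
    next
      case False then have "(x+y)^2 > 0" by simp
      then show ?thesis by (smt (verit) zero_le_power2)
    qed
    finally show ?thesis .
  qed
  have e: "1 + (1 - 2*(x+y))^2 = 2 * (1 - 2 * (x + y) * (1 - x - y))"
    by (simp add: power2_eq_square algebra_simps)
  show ?thesis using pS unfolding t phi_def Bf_def B_step_def Let_def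
    by (simp add: e divide_simps) (simp add: power2_eq_square algebra_simps)
qed

lemma phi_P: "phi (P_step t) = Pf (phi t)"
proof -
  obtain x y z where t: "t = (x, y, z)" by (cases t) auto
  show ?thesis unfolding t phi_def Pf_def P_step_def Let_def
    by (simp add: power2_eq_square power3_eq_cube algebra_simps)
qed

lemma phi_steps: "phi (apply_steps ss t) = stepsF ss (phi t)"
proof (induction ss arbitrary: t)
  case Nil then show ?case by simp
next
  case (Cons s ss) then show ?case
    by (cases s) (simp_all add: phi_B phi_P)
qed

definition inv :: "triple \<Rightarrow> bool" where
  "inv t = (case t of (b, f, g) \<Rightarrow> 0 < b \<and> b \<le> 1 \<and> 0 \<le> g \<and> g \<le> f \<and> f \<le> 1 \<and> g \<le> b)"

definition le3 :: "triple \<Rightarrow> triple \<Rightarrow> bool" where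
  "le3 t u = (case t of (b, f, g) \<Rightarrow> case u of (b', f', g') \<Rightarrow> b = b' \<and> f \<le> f' \<and> g \<le> g')"

lemma cube_mono:
  fixes f f2 c :: real
  assumes "0 \<le> f" "f \<le> f2" "f2^2 \<le> c"
  shows "3*c*f - f^3 \<le> 3*c*f2 - f2^3"
proof -
  have "f^2 \<le> c" using assms by (smt (verit) power_mono)
  have "f*f2 \<le> c" using assms by (smt (verit) mult_right_mono power2_eq_square)
  have "(3*c*f2 - f2^3) - (3*c*f - f^3) = (f2 - f) * ((c - f2^2) + (c - f*f2) + (c - f^2))"
    by (simp add: power2_eq_square power3_eq_cube algebra_simps)
  also have "\<dots> \<ge> 0" using assms \<open>f^2 \<le> c\<close> \<open>f*f2 \<le> c\<close> by simp
  finally show ?thesis by simp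
qed

lemma Bf_parts:
  assumes "0 < b" "b \<le> 1" "0 \<le> f" "0 \<le> g" "f^2 + g^2 \<le> 1 + b^2" "f*g \<le> b"
  shows "inv (Bf (b, f, g))"
proof -
  define N where "N = 1 + b^2"
  have N: "N > 0" unfolding N_def by (simp add: add_pos_nonneg)
  have e1: "(b-1)^2 = b^2 - 2*b + 1" by (simp add: power2_eq_square algebra_simps)
  have 1: "2*b \<le> N" unfolding N_def using zero_le_power2[of "b - 1"] e1 by linarith
  have e2: "(f-g)^2 = f^2 - 2*f*g + g^2" by (simp add: power2_eq_square algebra_simps)
  have 2: "2*f*g \<le> f^2+g^2" using zero_le_power2[of "f - g"] e2 by linarith
  have a1: "0 < 2*b/N" using N assms by simp
  have a2: "2*b/N \<le> 1" using N 1 by simp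
  have a3: "0 \<le> 2*f*g/N" using N assms by simp
  have a4: "2*f*g/N \<le> (f^2+g^2)/N" using N 2 by (simp add: divide_right_mono)
  have a5: "(f^2+g^2)/N \<le> 1" using N assms unfolding N_def by simp
  have a6: "2*f*g/N \<le> 2*b/N" using N assms by (simp add: divide_right_mono)
  show ?thesis using a1 a2 a3 a4 a5 a6 unfolding Bf_def inv_def N_def by simp
qed

lemma inv_B: assumes "inv t" shows "inv (Bf t)"
proof -
  obtain b f g where t: "t = (b, f, g)" by (cases t) auto
  have h: "0 < b" "b \<le> 1" "0 \<le> g" "g \<le> f" "f \<le> 1" "g \<le> b" using assms by (auto simp: inv_def t)
  have "f^2 \<le> 1" using h by (simp add: power_le_one)
  moreover have "g^2 \<le> b^2" using h by (simp add: power_mono)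
  ultimately have s: "f^2 + g^2 \<le> 1 + b^2" by linarith
  have "f*g \<le> 1*b" using h by (intro mult_mono) auto
  then show ?thesis unfolding t using h s by (intro Bf_parts) auto
qed

lemma inv_P: assumes "inv t" shows "inv (Pf t)"
proof -
  obtain b f g where t: "t = (b, f, g)" by (cases t) auto
  have h: "0 < b" "b \<le> 1" "0 \<le> g" "g \<le> f" "f \<le> 1" "g \<le> b" using assms by (auto simp: inv_def t)
  have b2: "b^2 \<le> 1" using h by (simp add: power_le_one)
  have gb: "g^2 \<le> b^2" using h by (simp add: power_mono)
  have 1: "0 \<le> 3*b^2*g - g^3"
  proof -
    have "3*b^2*g - g^3 = g * (3*b^2 - g^2)" by (simp add: power2_eq_square power3_eq_cube algebra_simps)
    moreover have "0 \<le> 3*b^2 - g^2" using gb zero_le_power2[of b] by linarith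
    ultimately show ?thesis using h by simp
  qed
  have 2: "3*b^2*g - g^3 \<le> 3*b^2*b - b^3" using cube_mono[of g b "b^2"] h by simp
  have 3: "3*b^2*g - g^3 \<le> 3*1*g - g^3" using h b2 by (simp add: mult_right_mono)
  have 4: "3*1*g - g^3 \<le> 3*1*f - f^3" using cube_mono[of g f 1] h by (simp add: power_le_one)
  have 5: "3*1*f - f^3 \<le> 3*1*1 - 1^3" using cube_mono[of f 1 1] h by simp
  have 6: "0 < b^3" using h by simp
  have 7: "b^3 \<le> 1" using h by (simp add: power_le_one)
  have 8: "3*b^2*b - b^3 = 2*b^3" by (simp add: power2_eq_square power3_eq_cube)
  show ?thesis unfolding t Pf_def inv_def using 1 2 3 4 5 6 7 8 by simp
qed

lemma mono_B: assumes "inv t" "inv u" "le3 t u" shows "le3 (Bf t) (Bf u)"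
proof -
  obtain b f g where t: "t = (b, f, g)" by (cases t) auto
  obtain b' f2 g2 where u: "u = (b', f2, g2)" by (cases u) auto
  have h: "0 \<le> g" "g \<le> f" "b = b'" "f \<le> f2" "g \<le> g2" using assms by (auto simp: inv_def le3_def t u)
  have N: "1 + b^2 > 0" by (simp add: add_pos_nonneg)
  have "f^2 \<le> f2^2" using h by (simp add: power_mono)
  moreover have "g^2 \<le> g2^2" using h by (simp add: power_mono)
  ultimately have 1: "f^2 + g^2 \<le> f2^2 + g2^2" by linarith
  have 2: "f*g \<le> f2*g2" using h by (intro mult_mono) auto
  show ?thesis unfolding t u Bf_def le3_def using h N 1 2
    by (simp add: divide_simps)
qed

lemma mono_P: assumes "inv t" "inv u" "le3 t u" shows "le3 (Pf t) (Pf u)"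
proof -
  obtain b f g where t: "t = (b, f, g)" by (cases t) auto
  obtain b' f2 g2 where u: "u = (b', f2, g2)" by (cases u) auto
  have h: "0 \<le> g" "0 \<le> f" "b = b'" "f \<le> f2" "g \<le> g2" "f2 \<le> 1" "g2 \<le> b" "0 < b"
    using assms by (auto simp: inv_def le3_def t u)
  have 1: "3*1*f - f^3 \<le> 3*1*f2 - f2^3" using cube_mono[of f f2 1] h by (simp add: power_le_one)
  have 2: "3*b^2*g - g^3 \<le> 3*b^2*g2 - g2^3" using cube_mono[of g g2 "b^2"] h by (simp add: power_mono)
  show ?thesis unfolding t u Pf_def le3_def using h 1 2 by simp
qed

lemma mono_steps: assumes "inv t" "inv u" "le3 t u"
  shows "inv (stepsF ss t) \<and> inv (stepsF ss u) \<and> le3 (stepsF ss t) (stepsF ss u)"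
  using assms
proof (induction ss arbitrary: t u)
  case Nil then show ?case by simp
next
  case (Cons s ss)
  show ?case
  proof (cases s)
    case B then show ?thesis
      using Cons.IH[OF inv_B[OF Cons.prems(1)] inv_B[OF Cons.prems(2)] mono_B[OF Cons.prems]] by simp
  next
    case P then show ?thesis
      using Cons.IH[OF inv_P[OF Cons.prems(1)] inv_P[OF Cons.prems(2)] mono_P[OF Cons.prems]] by simp
  qed
qed

lemma H2_mono:
  fixes p q :: real
  assumes "0 \<le> p" "p \<le> q" "q \<le> 1/2"
  shows "H2 p \<le> H2 q"
proof (cases "p = 0")
  case True
  then have "H2 p = 0" by (simp add: H2_def)
  moreover have "H2 q \<ge> 0"
  proof (cases "q = 0")
    case True then show ?thesis by (simp add: H2_def)
  next
    case False
    then have q: "0 < q" "q < 1" using assms by auto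
    have "log 2 q \<le> 0" using q by simp
    moreover have "log 2 (1-q) \<le> 0" using q by simp
    ultimately have "q * log 2 q \<le> 0" "(1-q) * log 2 (1-q) \<le> 0" using q
      by (simp_all add: mult_nonneg_nonpos)
    then show ?thesis by (simp add: H2_def)
  qed
  ultimately show ?thesis by simp
next
  case False
  then have p0: "0 < p" using assms by simp
  define h where "h x = - (x * ln x) - (1-x) * ln (1-x)" for x :: real
  have hH: "H2 x = h x / ln 2" if "0 < x" "x < 1" for x
    using that by (simp add: H2_def h_def log_def diff_divide_distrib)
  have "h p \<le> h q"
  proof (rule DERIV_nonneg_imp_increasing_open[OF assms(2)])
    fix x assume x: "p < x" "x < q"
    then have x0: "0 < x" "x < 1" "x \<le> 1 - x" using p0 assms by auto
    have "DERIV h x :> ln (1-x) - ln x"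
      unfolding h_def
      using x0 by (auto intro!: derivative_eq_intros)
    moreover have "ln (1-x) - ln x \<ge> 0" using x0 by simp
    ultimately show "\<exists>y. DERIV h x :> y \<and> y \<ge> 0" by blast
  next
    show "continuous_on {p..q} h" unfolding h_def using p0 assms
      by (intro continuous_intros) auto
  qed
  then show ?thesis using hH p0 assms by (simp add: divide_right_mono)
qed

lemma inv_B0:
  assumes "0 < b" "b \<le> 1" "0 \<le> F" "F \<le> b" "0 \<le> G" "G \<le> F + (1 - b)"
  shows "inv (Bf (b, F, G))"
proof -
  have G1: "G \<le> 1" using assms by simp
  have "F^2 \<le> b^2" using assms by (simp add: power_mono)
  moreover have "G^2 \<le> 1" using assms G1 by (simp add: power_le_one)
  ultimately have s: "F^2 + G^2 \<le> 1 + b^2" by linarith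
  have "F*G \<le> b * 1" using assms G1 by (intro mult_mono) auto
  then show ?thesis using assms s by (intro Bf_parts) auto
qed

lemma mono_B0:
  assumes "0 \<le> F" "0 \<le> G" "G \<le> G2"
  shows "le3 (Bf (b, F, G)) (Bf (b, F, G2))"
proof -
  have N: "1 + b^2 > 0" by (simp add: add_pos_nonneg)
  have "G^2 \<le> G2^2" using assms by (simp add: power_mono)
  then have 1: "F^2 + G^2 \<le> F^2 + G2^2" by linarith
  have 2: "F*G \<le> F*G2" using assms by (simp add: mult_left_mono)
  show ?thesis unfolding Bf_def le3_def using assms N 1 2
    by (simp add: divide_simps)
qed

lemma rate_eq:
  "rate ss eb xi a = 1 - H2 ((1 - fst (stepsF ss (phi (eb - a, a, xi * eb - a)))) / 2)
                       - H2 ((1 - fst (snd (stepsF ss (phi (eb - a, a, xi * eb - a))))) / 2)"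
proof -
  obtain x y z where e: "apply_steps ss (eb - a, a, xi * eb - a) = (x, y, z)"
    by (cases "apply_steps ss (eb - a, a, xi * eb - a)") auto
  have "stepsF ss (phi (eb - a, a, xi * eb - a)) = phi (x, y, z)" using phi_steps e by metis
  then have s: "stepsF ss (phi (eb - a, a, xi * eb - a)) = (1 - 2*(x+y), 1 - 2*(y+z), 1 - 2*(x+z))"
    by (simp add: phi_def)
  have 1: "(1 - (1 - 2*(x+y))) / 2 = x + y" by simp
  have 2: "(1 - (1 - 2*(y+z))) / 2 = z + y" by simp
  show ?thesis unfolding rate_def e s fst_conv snd_conv 1 2 by simp
qed

theorem corollary2:
  fixes eb xi :: real and ss :: "step list"
  assumes "eb > 0"
    and "xi * eb = 1/2 - (1 - 3*eb) / (2 * sqrt 2) + sqrt ((1 - (1 - 3*eb)^2) / 24)"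
    and "xi \<ge> 1"
    and "eb < 1 / (2 * (1 + xi))"
    and "eb < 1 / (2 * xi)"
    and "ss \<noteq> []" and "hd ss = B"
  shows "\<forall>a \<in> {0..eb}. rate ss eb xi 0 \<le> rate ss eb xi a"
proof
  fix a assume a: "a \<in> {0..eb}"
  obtain ss' where ss: "ss = B # ss'" using assms(6,7) by (cases ss) auto
  define w where "w = xi * eb"
  have w1: "eb \<le> w" using assms(1,3) unfolding w_def by simp
  have w2: "2 * (eb + w) < 1" using assms(1,3,4) unfolding w_def by (simp add: field_simps)
  define b where "b = 1 - 2*eb"
  define F where "F = 1 - 2*w"
  have ph: "phi (eb - c, c, xi * eb - c) = (b, F, 1 - 2*eb - 2*w + 4*c)" for c
    unfolding phi_def b_def F_def w_def by simp
  have i0: "inv (Bf (b, F, 1 - 2*eb - 2*w + 4*0))"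
    by (rule inv_B0) (use w1 w2 assms(1) in \<open>auto simp: b_def F_def\<close>)
  have ia: "inv (Bf (b, F, 1 - 2*eb - 2*w + 4*a))"
    by (rule inv_B0) (use a w1 w2 assms(1) in \<open>auto simp: b_def F_def\<close>)
  have la: "le3 (Bf (b, F, 1 - 2*eb - 2*w + 4*0)) (Bf (b, F, 1 - 2*eb - 2*w + 4*a))"
    by (rule mono_B0) (use a w1 w2 assms(1) in \<open>auto simp: b_def F_def\<close>)
  define U0 where "U0 = stepsF ss' (Bf (b, F, 1 - 2*eb - 2*w + 4*0))"
  define Ua where "Ua = stepsF ss' (Bf (b, F, 1 - 2*eb - 2*w + 4*a))"
  have M: "inv U0 \<and> inv Ua \<and> le3 U0 Ua"
    unfolding U0_def Ua_def by (rule mono_steps[OF i0 ia la])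
  obtain b0 f0 g0 where u0: "U0 = (b0, f0, g0)" by (cases U0) auto
  obtain b1 f1 g1 where u1: "Ua = (b1, f1, g1)" by (cases Ua) auto
  have hh: "b0 = b1" "0 \<le> f0" "f0 \<le> f1" "f1 \<le> 1"
    using M unfolding u0 u1 inv_def le3_def by auto
  have e0: "stepsF ss (phi (eb - 0, 0, xi * eb - 0)) = (b0, f0, g0)"
    unfolding ss ph[of 0] using u0 unfolding U0_def by simp
  have e1: "stepsF ss (phi (eb - a, a, xi * eb - a)) = (b1, f1, g1)"
    unfolding ss ph[of a] using u1 unfolding Ua_def by simp
  have r0: "rate ss eb xi 0 = 1 - H2 ((1 - b0)/2) - H2 ((1 - f0)/2)"
    using rate_eq[of ss eb xi 0] unfolding e0 by simp
  have ra: "rate ss eb xi a = 1 - H2 ((1 - b1)/2) - H2 ((1 - f1)/2)"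
    using rate_eq[of ss eb xi a] unfolding e1 by simp
  have "H2 ((1 - f1)/2) \<le> H2 ((1 - f0)/2)"
    by (rule H2_mono) (use hh in auto)
  then show "rate ss eb xi 0 \<le> rate ss eb xi a" using r0 ra hh by simp
qed

end
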